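(* Let $F_1,\dots,F_n:\mathbb{R}^d\to\mathbb{R}^d$, $F=\frac1n\sum_iF_i$ be $L$-Lipschitz, let $x^*$ satisfy $F(x^* )=0$, and let $g$ be an unbiased random estimator of $F$ ($\mathbb{E}[g(x)]=F(x)$ for all $x$). Consider the following conditions (each required for all $x\in\mathbb{R}^d$, with some constants): (1) Bounded operator: $\mathbb{E}\|g(x)\|^2\le\sigma^2$; (2) Bounded variance: $\mathbb{E}\|g(x)-F(x)\|^2\le\sigma^2$; (3) Growth condition: $\mathbb{E}\|g(x)\|^2\le\alpha\|F(x)\|^2+\beta$; (4) Expected co-coercivity: $\mathbb{E}\|g(x)-g(x^* )\|^2\le l_F\langle F(x),x-x^*\rangle$; (5) Expected Residual: $\mathbb{E}\|(g(x)-g(x^* ))-(F(x)-F(x^* ))\|^2\le\frac{\delta}{2}\|x-x^*\|^2$; (6) $\mathbb{E}\|g(x)\|^2\le\delta\|x-x^*\|^2+\|F(x)\|^2+2\sigma_*^2$; (7) $g(x)=\frac1n\sum_iv_iF_i(x)$ for a sampling vector $v$ and each $F_i$ is $L_i$-Lipschitz. Then (1)$\Rightarrow$(2)$\Rightarrow$(3)$\Rightarrow$(6), (7)$\Rightarrow$(5), (4)$\Rightarrow$(5), and (5)$\Rightarrow$(6) (the last one when $\mathbb{E}\|g(x^* )\|^2<\infty$), where each implication means that if the first condition holds with some constants then the second holds with some (finite, nonnegative) constants.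
   Context: A sampling vector is a random $v\in\mathbb{R}^n_+$ with $\mathbb{E}[v_i]=1$ for all $i$. $L$-Lipschitz means $\|F(x)-F(y)\|\le L\|x-y\|$.
   Formalization: In (7) each component $v_i$ of the sampling vector v also has a finite second moment, besides nonnegativity and $\mathbb{E}[v_i]=1$. The statement above fails without it. *)

theory Defs
  imports "HOL-Probability.Probability"
begin

text \<open>Second moment E||X||^2 of a random vector, as an extended nonnegative real
  (so that it may be infinite).\<close>
definition Esq :: "'w measure \<Rightarrow> ('w \<Rightarrow> 'a::real_normed_vector) \<Rightarrow> ennreal" where
  "Esq M X = (\<integral>\<^sup>+ \<omega>. ennreal ((norm (X \<omega>))\<^sup>2) \<partial>M)"

definition bounded_operator :: "'w measure \<Rightarrow> ('w \<Rightarrow> 'a::real_normed_vector \<Rightarrow> 'a) \<Rightarrow> bool" where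
  "bounded_operator M g \<longleftrightarrow> (\<exists>\<sigma>::real. \<forall>x. Esq M (\<lambda>\<omega>. g \<omega> x) \<le> ennreal (\<sigma>\<^sup>2))"

definition bounded_variance :: "'w measure \<Rightarrow> ('w \<Rightarrow> 'a::real_normed_vector \<Rightarrow> 'a) \<Rightarrow> ('a \<Rightarrow> 'a) \<Rightarrow> bool" where
  "bounded_variance M g F \<longleftrightarrow> (\<exists>\<sigma>::real. \<forall>x. Esq M (\<lambda>\<omega>. g \<omega> x - F x) \<le> ennreal (\<sigma>\<^sup>2))"

definition growth_condition :: "'w measure \<Rightarrow> ('w \<Rightarrow> 'a::real_normed_vector \<Rightarrow> 'a) \<Rightarrow> ('a \<Rightarrow> 'a) \<Rightarrow> bool" where
  "growth_condition M g F \<longleftrightarrow> (\<exists>\<alpha> \<beta>::real. 0 \<le> \<alpha> \<and> 0 \<le> \<beta> \<and>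
     (\<forall>x. Esq M (\<lambda>\<omega>. g \<omega> x) \<le> ennreal (\<alpha> * (norm (F x))\<^sup>2 + \<beta>)))"

text \<open>(4) Expected co-coercivity.  The real inequality E||.||^2 <= r (with E||.||^2 in [0,oo])
  is rendered as 0 <= r and E||.||^2 <= ennreal r.\<close>
definition expected_cocoercive :: "'w measure \<Rightarrow> ('w \<Rightarrow> 'a::real_inner \<Rightarrow> 'a) \<Rightarrow> ('a \<Rightarrow> 'a) \<Rightarrow> 'a \<Rightarrow> bool" where
  "expected_cocoercive M g F xs \<longleftrightarrow> (\<exists>l::real. 0 \<le> l \<and>
     (\<forall>x. 0 \<le> l * inner (F x) (x - xs) \<and>
          Esq M (\<lambda>\<omega>. g \<omega> x - g \<omega> xs) \<le> ennreal (l * inner (F x) (x - xs))))"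

definition expected_residual :: "'w measure \<Rightarrow> ('w \<Rightarrow> 'a::real_normed_vector \<Rightarrow> 'a) \<Rightarrow> ('a \<Rightarrow> 'a) \<Rightarrow> 'a \<Rightarrow> bool" where
  "expected_residual M g F xs \<longleftrightarrow> (\<exists>\<delta>::real. 0 \<le> \<delta> \<and>
     (\<forall>x. Esq M (\<lambda>\<omega>. (g \<omega> x - g \<omega> xs) - (F x - F xs)) \<le> ennreal (\<delta> / 2 * (norm (x - xs))\<^sup>2)))"

definition condition6 :: "'w measure \<Rightarrow> ('w \<Rightarrow> 'a::real_normed_vector \<Rightarrow> 'a) \<Rightarrow> ('a \<Rightarrow> 'a) \<Rightarrow> 'a \<Rightarrow> bool" where
  "condition6 M g F xs \<longleftrightarrow> (\<exists>\<delta> \<sigma>s::real. 0 \<le> \<delta> \<and>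
     (\<forall>x. Esq M (\<lambda>\<omega>. g \<omega> x) \<le> ennreal (\<delta> * (norm (x - xs))\<^sup>2 + (norm (F x))\<^sup>2 + 2 * \<sigma>s\<^sup>2)))"

definition sampling_vector :: "'w measure \<Rightarrow> nat \<Rightarrow> ('w \<Rightarrow> nat \<Rightarrow> real) \<Rightarrow> bool" where
  "sampling_vector M n v \<longleftrightarrow> (\<forall>i<n. integrable M (\<lambda>\<omega>. v \<omega> i) \<and>
     (AE \<omega> in M. 0 \<le> v \<omega> i) \<and> integral\<^sup>L M (\<lambda>\<omega>. v \<omega> i) = 1)"

text \<open>(7) Arbitrary sampling; the sampling vector is additionally required to have finite
  second moments.\<close>
definition arbitrary_sampling :: "'w measure \<Rightarrow> ('w \<Rightarrow> 'a::real_normed_vector \<Rightarrow> 'a) \<Rightarrow> nat \<Rightarrow> (nat \<Rightarrow> 'a \<Rightarrow> 'a) \<Rightarrow> bool" where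
  "arbitrary_sampling M g n Fs \<longleftrightarrow> (\<exists>(v::'w \<Rightarrow> nat \<Rightarrow> real) (Ls::nat \<Rightarrow> real). sampling_vector M n v \<and>
     (\<forall>i<n. integrable M (\<lambda>\<omega>. (v \<omega> i)\<^sup>2)) \<and>
     (\<forall>x. AE \<omega> in M. g \<omega> x = (1 / real n) *\<^sub>R (\<Sum>i<n. v \<omega> i *\<^sub>R Fs i x)) \<and>
     (\<forall>i<n. lipschitz_on (Ls i) UNIV (Fs i)))"

end

theory Submission
  imports Defs
begin

lemma sq2: fixes a b :: "'a::real_normed_vector"
  shows "(norm (a + b))\<^sup>2 \<le> 2*(norm a)\<^sup>2 + 2*(norm b)\<^sup>2"
proof -
  have "norm (a+b) \<le> norm a + norm b" by (rule norm_triangle_ineq)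
  hence "(norm(a+b))\<^sup>2 \<le> (norm a + norm b)\<^sup>2" by (rule power_mono) simp
  moreover have "0 \<le> (norm a - norm b)\<^sup>2" by simp
  ultimately show ?thesis by (simp add: power2_sum power2_diff)
qed

lemma sq2m: fixes a b :: "'a::real_normed_vector"
  shows "(norm (a - b))\<^sup>2 \<le> 2*(norm a)\<^sup>2 + 2*(norm b)\<^sup>2"
  using sq2[of a "-b"] by simp

lemma sq3: fixes a b c :: "'a::real_normed_vector"
  shows "(norm (a + b + c))\<^sup>2 \<le> 3*(norm a)\<^sup>2 + 3*(norm b)\<^sup>2 + 3*(norm c)\<^sup>2"
proof -
  have "norm (a+b+c) \<le> norm a + norm b + norm c"
    by (metis add_right_mono norm_triangle_ineq order_trans)
  hence "(norm(a+b+c))\<^sup>2 \<le> (norm a + norm b + norm c)\<^sup>2" by (rule power_mono) simp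
  moreover have "0 \<le> (norm a - norm b)\<^sup>2" "0 \<le> (norm a - norm c)\<^sup>2" "0 \<le> (norm b - norm c)\<^sup>2" by simp_all
  ultimately show ?thesis by (simp add: power2_sum power2_diff ring_distribs)
qed

lemma enn_aff: "0 \<le> (c::real) \<Longrightarrow> 0 \<le> d \<Longrightarrow> 0 \<le> t \<Longrightarrow> ennreal (c + d*t) = ennreal c + ennreal d * ennreal t"
  by (simp add: ennreal_mult)

lemma Esq_le3:
  fixes X Y Z :: "'w \<Rightarrow> 'a::real_normed_vector"
  assumes "prob_space M" "Y \<in> borel_measurable M" "Z \<in> borel_measurable M"
    "AE \<omega> in M. (norm (X \<omega>))\<^sup>2 \<le> a * (norm (Y \<omega>))\<^sup>2 + b * (norm (Z \<omega>))\<^sup>2 + d"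
    "0 \<le> a" "0 \<le> b" "0 \<le> d" "Esq M Y \<le> ennreal rY" "Esq M Z \<le> ennreal rZ" "0 \<le> rY" "0 \<le> rZ"
  shows "Esq M X \<le> ennreal (a*rY + b*rZ + d)"
proof -
  interpret prob_space M by fact
  have "Esq M X \<le> (\<integral>\<^sup>+\<omega>. ennreal a * ennreal ((norm (Y \<omega>))\<^sup>2) + ennreal b * ennreal ((norm (Z \<omega>))\<^sup>2) + ennreal d \<partial>M)"
    unfolding Esq_def
  proof (rule nn_integral_mono_AE)
    show "AE \<omega> in M. ennreal ((norm (X \<omega>))\<^sup>2) \<le> ennreal a * ennreal ((norm (Y \<omega>))\<^sup>2) + ennreal b * ennreal ((norm (Z \<omega>))\<^sup>2) + ennreal d"
      using assms(4)
    proof eventually_elim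
      case (elim \<omega>)
      then have "ennreal ((norm (X \<omega>))\<^sup>2) \<le> ennreal (a * (norm (Y \<omega>))\<^sup>2 + b * (norm (Z \<omega>))\<^sup>2 + d)"
        by (rule ennreal_leI)
      also have "\<dots> = ennreal a * ennreal ((norm (Y \<omega>))\<^sup>2) + ennreal b * ennreal ((norm (Z \<omega>))\<^sup>2) + ennreal d"
        using assms(5-7) by (simp add: ennreal_plus ennreal_mult)
      finally show ?case .
    qed
  qed
  also have "\<dots> = ennreal a * Esq M Y + ennreal b * Esq M Z + ennreal d"
    using assms(2,3) by (simp add: nn_integral_add nn_integral_cmult Esq_def emeasure_space_1)
  also have "\<dots> \<le> ennreal a * ennreal rY + ennreal b * ennreal rZ + ennreal d"
    using assms(8,9) by (intro add_mono mult_left_mono) auto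
  also have "\<dots> = ennreal (a*rY + b*rZ + d)"
    using assms by (simp add: ennreal_plus ennreal_mult)
  finally show ?thesis .
qed

lemma norm_integral_Esq:
  fixes f :: "'w \<Rightarrow> 'a::{banach,second_countable_topology}"
  assumes "prob_space M" "integrable M f" "Esq M f \<le> ennreal r" "0 \<le> r"
  shows "norm (integral\<^sup>L M f) \<le> (1 + r) / 2"
proof -
  interpret prob_space M by fact
  have m: "f \<in> borel_measurable M" using assms(2) by auto
  have "ennreal (norm (integral\<^sup>L M f)) \<le> (\<integral>\<^sup>+x. norm (f x) \<partial>M)"
    using integral_norm_bound_ennreal[OF assms(2)] .
  also have "\<dots> \<le> (\<integral>\<^sup>+x. ennreal (1/2) + ennreal (1/2) * ennreal ((norm (f x))\<^sup>2) \<partial>M)"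
  proof (rule nn_integral_mono)
    fix x
    have "0 \<le> (norm (f x) - 1)\<^sup>2" by simp
    hence "norm (f x) \<le> 1/2 + 1/2 * (norm (f x))\<^sup>2" by (simp add: power2_diff)
    hence "ennreal (norm (f x)) \<le> ennreal (1/2 + 1/2 * (norm (f x))\<^sup>2)" by (rule ennreal_leI)
    moreover have "ennreal (1/2 + 1/2 * (norm (f x))\<^sup>2) = ennreal (1/2) + ennreal (1/2) * ennreal ((norm (f x))\<^sup>2)"
      by (rule enn_aff) auto
    ultimately show "ennreal (norm (f x)) \<le> ennreal (1/2) + ennreal (1/2) * ennreal ((norm (f x))\<^sup>2)"
      by simp
  qed
  also have "\<dots> = ennreal (1/2) + ennreal (1/2) * Esq M f"
    using m by (simp add: nn_integral_add nn_integral_cmult Esq_def emeasure_space_1)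
  also have "\<dots> \<le> ennreal (1/2) + ennreal (1/2) * ennreal r"
    using assms(3) by (intro add_mono mult_left_mono) auto
  also have "\<dots> = ennreal (1/2 + 1/2 * r)"
    by (rule enn_aff[symmetric]) (use assms(4) in auto)
  finally have "norm (integral\<^sup>L M f) \<le> 1/2 + 1/2 * r"
    using assms(4) by (subst (asm) ennreal_le_iff) auto
  thus ?thesis by simp
qed

lemma part1:
  fixes g :: "'w \<Rightarrow> 'a::euclidean_space \<Rightarrow> 'a"
  assumes P: "prob_space M" and I: "\<forall>x. integrable M (\<lambda>\<omega>. g \<omega> x)"
    and E: "\<forall>x. integral\<^sup>L M (\<lambda>\<omega>. g \<omega> x) = F x"
    and B: "bounded_operator M g"
  shows "bounded_variance M g F"
proof -
  obtain \<sigma> where \<sigma>: "\<forall>x. Esq M (\<lambda>\<omega>. g \<omega> x) \<le> ennreal (\<sigma>\<^sup>2)"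
    using B unfolding bounded_operator_def by blast
  have meas[measurable]: "\<And>x. (\<lambda>\<omega>. g \<omega> x) \<in> borel_measurable M" using I borel_measurable_integrable by blast
  define C where "C = (1 + \<sigma>\<^sup>2) / 2"
  have C0: "0 \<le> C" unfolding C_def by simp
  show ?thesis unfolding bounded_variance_def
  proof (rule exI[of _ "sqrt (2*\<sigma>\<^sup>2 + 2*C\<^sup>2)"], intro allI)
    fix x
    have nF: "norm (F x) \<le> C"
      using norm_integral_Esq[OF P, of "\<lambda>\<omega>. g \<omega> x" "\<sigma>\<^sup>2"] I E \<sigma> by (simp add: C_def)
    have "Esq M (\<lambda>\<omega>. g \<omega> x - F x) \<le> ennreal (2*\<sigma>\<^sup>2 + 0*0 + 2*(norm (F x))\<^sup>2)"
    proof (rule Esq_le3[where Y="\<lambda>\<omega>. g \<omega> x" and Z="\<lambda>_. 0" and a=2 and b=0])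
      show "AE \<omega> in M. (norm (g \<omega> x - F x))\<^sup>2 \<le> 2 * (norm (g \<omega> x))\<^sup>2 + 0 * (norm (0::'a))\<^sup>2 + 2 * (norm (F x))\<^sup>2"
        using sq2m by auto
    qed (use P meas \<sigma> in \<open>auto simp: Esq_def intro!: borel_measurable_diff\<close>)
    also have "\<dots> \<le> ennreal ((sqrt (2*\<sigma>\<^sup>2 + 2*C\<^sup>2))\<^sup>2)"
    proof (rule ennreal_leI)
      have "(norm (F x))\<^sup>2 \<le> C\<^sup>2" using nF by (simp add: power_mono)
      thus "2*\<sigma>\<^sup>2 + 0*0 + 2*(norm (F x))\<^sup>2 \<le> (sqrt (2*\<sigma>\<^sup>2 + 2*C\<^sup>2))\<^sup>2" by simp
    qed
    finally show "Esq M (\<lambda>\<omega>. g \<omega> x - F x) \<le> ennreal ((sqrt (2*\<sigma>\<^sup>2 + 2*C\<^sup>2))\<^sup>2)" .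
  qed
qed

lemma part2:
  fixes g :: "'w \<Rightarrow> 'a::euclidean_space \<Rightarrow> 'a"
  assumes P: "prob_space M" and I: "\<forall>x. integrable M (\<lambda>\<omega>. g \<omega> x)"
    and B: "bounded_variance M g F"
  shows "growth_condition M g F"
proof -
  obtain \<sigma> where \<sigma>: "\<forall>x. Esq M (\<lambda>\<omega>. g \<omega> x - F x) \<le> ennreal (\<sigma>\<^sup>2)"
    using B unfolding bounded_variance_def by blast
  have meas[measurable]: "\<And>x. (\<lambda>\<omega>. g \<omega> x) \<in> borel_measurable M" using I borel_measurable_integrable by blast
  show ?thesis unfolding growth_condition_def
  proof (rule exI[of _ "2::real"], rule exI[of _ "2*\<sigma>\<^sup>2"], intro conjI allI)
    fix x
    have "Esq M (\<lambda>\<omega>. g \<omega> x) \<le> ennreal (2*\<sigma>\<^sup>2 + 0*0 + 2*(norm (F x))\<^sup>2)"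
    proof (rule Esq_le3[where Y="\<lambda>\<omega>. g \<omega> x - F x" and Z="\<lambda>_. 0" and a=2 and b=0])
      show "AE \<omega> in M. (norm (g \<omega> x))\<^sup>2 \<le> 2 * (norm (g \<omega> x - F x))\<^sup>2 + 0 * (norm (0::'a))\<^sup>2 + 2 * (norm (F x))\<^sup>2"
        using sq2[of "g _ x - F x" "F x"] by auto
    qed (use P meas \<sigma> in \<open>auto simp: Esq_def intro!: borel_measurable_diff\<close>)
    thus "Esq M (\<lambda>\<omega>. g \<omega> x) \<le> ennreal (2 * (norm (F x))\<^sup>2 + 2*\<sigma>\<^sup>2)" by (simp add: add.commute)
  qed auto
qed

lemma FL:
  assumes "lipschitz_on L UNIV F" "F xs = 0"
  shows "norm (F x) \<le> L * norm (x - xs)"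
  using lipschitz_onD[OF assms(1), of x xs] assms(2) by (simp add: dist_norm)

lemma FL2:
  assumes "lipschitz_on L UNIV F" "F xs = 0"
  shows "(norm (F x))\<^sup>2 \<le> L\<^sup>2 * (norm (x - xs))\<^sup>2"
proof -
  have "(norm (F x))\<^sup>2 \<le> (L * norm (x - xs))\<^sup>2" using FL[OF assms] by (rule power_mono) simp
  thus ?thesis by (simp add: power_mult_distrib)
qed

lemma part3:
  fixes g :: "'w \<Rightarrow> 'a::euclidean_space \<Rightarrow> 'a"
  assumes Lip: "lipschitz_on L UNIV F" and F0: "F xs = 0"
    and B: "growth_condition M g F"
  shows "condition6 M g F xs"
proof -
  obtain \<alpha> \<beta> where ab: "0 \<le> \<alpha>" "0 \<le> \<beta>" and
    bd: "\<forall>x. Esq M (\<lambda>\<omega>. g \<omega> x) \<le> ennreal (\<alpha> * (norm (F x))\<^sup>2 + \<beta>)"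
    using B unfolding growth_condition_def by blast
  show ?thesis unfolding condition6_def
  proof (rule exI[of _ "max (\<alpha>-1) 0 * L\<^sup>2"], rule exI[of _ "sqrt (\<beta>/2)"], intro conjI allI)
    show "0 \<le> max (\<alpha>-1) 0 * L\<^sup>2" by simp
    fix x
    show "Esq M (\<lambda>\<omega>. g \<omega> x) \<le> ennreal (max (\<alpha>-1) 0 * L\<^sup>2 * (norm (x - xs))\<^sup>2 + (norm (F x))\<^sup>2 + 2 * (sqrt (\<beta>/2))\<^sup>2)"
    proof (rule order_trans[OF bd[rule_format] ennreal_leI])
      have nF: "(norm (F x))\<^sup>2 \<le> L\<^sup>2 * (norm (x - xs))\<^sup>2" by (rule FL2[OF Lip F0])
      have "\<alpha> * (norm (F x))\<^sup>2 \<le> (1 + max (\<alpha>-1) 0) * (norm (F x))\<^sup>2"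
        by (rule mult_right_mono) auto
      also have "\<dots> = (norm (F x))\<^sup>2 + max (\<alpha>-1) 0 * (norm (F x))\<^sup>2" by (simp add: algebra_simps)
      also have "\<dots> \<le> (norm (F x))\<^sup>2 + max (\<alpha>-1) 0 * (L\<^sup>2 * (norm (x - xs))\<^sup>2)"
        using nF by (intro add_left_mono mult_left_mono) auto
      finally show "\<alpha> * (norm (F x))\<^sup>2 + \<beta> \<le> max (\<alpha>-1) 0 * L\<^sup>2 * (norm (x - xs))\<^sup>2 + (norm (F x))\<^sup>2 + 2 * (sqrt (\<beta>/2))\<^sup>2"
        using ab by (simp add: algebra_simps)
    qed
  qed
qed

lemma part5:
  fixes g :: "'w \<Rightarrow> 'a::euclidean_space \<Rightarrow> 'a"
  assumes P: "prob_space M" and I: "\<forall>x. integrable M (\<lambda>\<omega>. g \<omega> x)"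
    and Lip: "lipschitz_on L UNIV F" and F0: "F xs = 0"
    and B: "expected_cocoercive M g F xs"
  shows "expected_residual M g F xs"
proof -
  obtain l where l0: "0 \<le> l" and h: "\<forall>x. 0 \<le> l * inner (F x) (x - xs) \<and>
          Esq M (\<lambda>\<omega>. g \<omega> x - g \<omega> xs) \<le> ennreal (l * inner (F x) (x - xs))"
    using B unfolding expected_cocoercive_def by blast
  have meas[measurable]: "\<And>x. (\<lambda>\<omega>. g \<omega> x) \<in> borel_measurable M" using I borel_measurable_integrable by blast
  have L0: "0 \<le> L" using Lip by (rule lipschitz_on_nonneg)
  show ?thesis unfolding expected_residual_def
  proof (rule exI[of _ "4 * (l * L + L\<^sup>2)"], intro conjI allI)
    show "0 \<le> 4 * (l * L + L\<^sup>2)" using l0 L0 by simp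
    fix x
    have h1: "0 \<le> l * inner (F x) (x - xs)" and h2: "Esq M (\<lambda>\<omega>. g \<omega> x - g \<omega> xs) \<le> ennreal (l * inner (F x) (x - xs))"
      using h by auto
    have "Esq M (\<lambda>\<omega>. g \<omega> x - g \<omega> xs - (F x - F xs)) \<le> ennreal (2 * (l * inner (F x) (x - xs)) + 0*0 + 2*(norm (F x - F xs))\<^sup>2)"
    proof (rule Esq_le3[where Y="\<lambda>\<omega>. g \<omega> x - g \<omega> xs" and Z="\<lambda>_. 0" and a=2 and b=0])
      show "AE \<omega> in M. (norm (g \<omega> x - g \<omega> xs - (F x - F xs)))\<^sup>2 \<le> 2 * (norm (g \<omega> x - g \<omega> xs))\<^sup>2 + 0 * (norm (0::'a))\<^sup>2 + 2 * (norm (F x - F xs))\<^sup>2"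
        using sq2m by auto
    qed (use P meas h1 h2 in \<open>auto simp: Esq_def intro!: borel_measurable_diff\<close>)
    also have "\<dots> \<le> ennreal (4 * (l * L + L\<^sup>2) / 2 * (norm (x - xs))\<^sup>2)"
    proof (rule ennreal_leI)
      have "inner (F x) (x - xs) \<le> norm (F x) * norm (x - xs)" by (rule norm_cauchy_schwarz)
      also have "\<dots> \<le> L * norm (x - xs) * norm (x - xs)"
        using FL[OF Lip F0, of x] by (rule mult_right_mono) simp
      finally have "l * inner (F x) (x - xs) \<le> l * (L * norm (x - xs) * norm (x - xs))"
        using l0 by (rule mult_left_mono)
      moreover have "(norm (F x - F xs))\<^sup>2 \<le> L\<^sup>2 * (norm (x - xs))\<^sup>2" using FL2[OF Lip F0, of x] F0 by simp
      ultimately show "2 * (l * inner (F x) (x - xs)) + 0*0 + 2*(norm (F x - F xs))\<^sup>2 \<le> 4 * (l * L + L\<^sup>2) / 2 * (norm (x - xs))\<^sup>2"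
        by (simp add: power2_eq_square algebra_simps)
    qed
    finally show "Esq M (\<lambda>\<omega>. g \<omega> x - g \<omega> xs - (F x - F xs)) \<le> ennreal (4 * (l * L + L\<^sup>2) / 2 * (norm (x - xs))\<^sup>2)" .
  qed
qed

lemma part6:
  fixes g :: "'w \<Rightarrow> 'a::euclidean_space \<Rightarrow> 'a"
  assumes P: "prob_space M" and I: "\<forall>x. integrable M (\<lambda>\<omega>. g \<omega> x)"
    and Lip: "lipschitz_on L UNIV F" and F0: "F xs = 0"
    and B: "expected_residual M g F xs" and Fin: "Esq M (\<lambda>\<omega>. g \<omega> xs) < \<infinity>"
  shows "condition6 M g F xs"
proof -
  obtain \<delta> where d0: "0 \<le> \<delta>" and h: "\<forall>x. Esq M (\<lambda>\<omega>. (g \<omega> x - g \<omega> xs) - (F x - F xs)) \<le> ennreal (\<delta> / 2 * (norm (x - xs))\<^sup>2)"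
    using B unfolding expected_residual_def by blast
  have meas[measurable]: "\<And>x. (\<lambda>\<omega>. g \<omega> x) \<in> borel_measurable M" using I borel_measurable_integrable by blast
  define S where "S = enn2real (Esq M (\<lambda>\<omega>. g \<omega> xs))"
  have S0: "0 \<le> S" unfolding S_def by simp
  have Se: "Esq M (\<lambda>\<omega>. g \<omega> xs) = ennreal S" unfolding S_def using Fin by simp
  show ?thesis unfolding condition6_def
  proof (rule exI[of _ "3 * \<delta> / 2 + 2 * L\<^sup>2"], rule exI[of _ "sqrt (3 * S / 2)"], intro conjI allI)
    show "0 \<le> 3 * \<delta> / 2 + 2 * L\<^sup>2" using d0 by simp
    fix x
    have "Esq M (\<lambda>\<omega>. g \<omega> x) \<le> ennreal (3 * (\<delta> / 2 * (norm (x - xs))\<^sup>2) + 3 * S + 3 * (norm (F x - F xs))\<^sup>2)"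
    proof (rule Esq_le3[where Y="\<lambda>\<omega>. (g \<omega> x - g \<omega> xs) - (F x - F xs)" and Z="\<lambda>\<omega>. g \<omega> xs" and a=3 and b=3])
      show "AE \<omega> in M. (norm (g \<omega> x))\<^sup>2 \<le> 3 * (norm ((g \<omega> x - g \<omega> xs) - (F x - F xs)))\<^sup>2 + 3 * (norm (g \<omega> xs))\<^sup>2 + 3 * (norm (F x - F xs))\<^sup>2"
      proof (intro AE_I2)
        fix \<omega>
        show "(norm (g \<omega> x))\<^sup>2 \<le> 3 * (norm ((g \<omega> x - g \<omega> xs) - (F x - F xs)))\<^sup>2 + 3 * (norm (g \<omega> xs))\<^sup>2 + 3 * (norm (F x - F xs))\<^sup>2"
          using sq3[of "(g \<omega> x - g \<omega> xs) - (F x - F xs)" "g \<omega> xs" "F x - F xs"] by simp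
      qed
    qed (use P meas h d0 S0 Se in \<open>auto simp: Esq_def intro!: borel_measurable_diff\<close>)
    also have "\<dots> \<le> ennreal ((3 * \<delta> / 2 + 2 * L\<^sup>2) * (norm (x - xs))\<^sup>2 + (norm (F x))\<^sup>2 + 2 * (sqrt (3 * S / 2))\<^sup>2)"
    proof (rule ennreal_leI)
      have "(norm (F x))\<^sup>2 \<le> L\<^sup>2 * (norm (x - xs))\<^sup>2" by (rule FL2[OF Lip F0])
      thus "3 * (\<delta> / 2 * (norm (x - xs))\<^sup>2) + 3 * S + 3 * (norm (F x - F xs))\<^sup>2 \<le> (3 * \<delta> / 2 + 2 * L\<^sup>2) * (norm (x - xs))\<^sup>2 + (norm (F x))\<^sup>2 + 2 * (sqrt (3 * S / 2))\<^sup>2"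
        using F0 S0 by (simp add: algebra_simps)
    qed
    finally show "Esq M (\<lambda>\<omega>. g \<omega> x) \<le> ennreal ((3 * \<delta> / 2 + 2 * L\<^sup>2) * (norm (x - xs))\<^sup>2 + (norm (F x))\<^sup>2 + 2 * (sqrt (3 * S / 2))\<^sup>2)" .
  qed
qed

lemma resid_eq:
  fixes Fs :: "nat \<Rightarrow> 'a \<Rightarrow> 'a::real_vector"
  shows "(c *\<^sub>R (\<Sum>i<n. v i *\<^sub>R Fs i x) - c *\<^sub>R (\<Sum>i<n. v i *\<^sub>R Fs i y)) - (c *\<^sub>R (\<Sum>i<n. Fs i x) - c *\<^sub>R (\<Sum>i<n. Fs i y))
     = c *\<^sub>R (\<Sum>i<n. (v i - 1) *\<^sub>R (Fs i x - Fs i y))"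
  by (simp add: scaleR_diff_right scaleR_diff_left sum_subtractf sum.distrib scaleR_add_right algebra_simps)

lemma resid_bound:
  fixes Fs :: "nat \<Rightarrow> 'a \<Rightarrow> 'a::real_normed_vector"
  assumes "n \<ge> 1" "\<forall>i<n. lipschitz_on (Ls i) UNIV (Fs i)"
  shows "(norm ((1 / real n) *\<^sub>R (\<Sum>i<n. (v i - 1) *\<^sub>R (Fs i x - Fs i y))))\<^sup>2
     \<le> real n * (norm (x - y))\<^sup>2 * (\<Sum>i<n. (Ls i)\<^sup>2 * (v i - 1)\<^sup>2)"
proof -
  let ?D = "norm (x - y)"
  have "norm ((1 / real n) *\<^sub>R (\<Sum>i<n. (v i - 1) *\<^sub>R (Fs i x - Fs i y))) = (1 / real n) * norm (\<Sum>i<n. (v i - 1) *\<^sub>R (Fs i x - Fs i y))"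
    by simp
  also have "\<dots> \<le> norm (\<Sum>i<n. (v i - 1) *\<^sub>R (Fs i x - Fs i y))"
    using assms(1) by (intro mult_left_le_one_le) auto
  also have "\<dots> \<le> (\<Sum>i<n. norm ((v i - 1) *\<^sub>R (Fs i x - Fs i y)))" by (rule norm_sum)
  also have "\<dots> \<le> (\<Sum>i<n. \<bar>v i - 1\<bar> * (Ls i * ?D))"
  proof (rule sum_mono)
    fix i assume "i \<in> {..<n}"
    hence "norm (Fs i x - Fs i y) \<le> Ls i * ?D"
      using lipschitz_onD[of "Ls i" UNIV "Fs i" x y] assms(2) by (auto simp: dist_norm)
    thus "norm ((v i - 1) *\<^sub>R (Fs i x - Fs i y)) \<le> \<bar>v i - 1\<bar> * (Ls i * ?D)"
      by (simp add: mult_left_mono)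
  qed
  finally have "(norm ((1 / real n) *\<^sub>R (\<Sum>i<n. (v i - 1) *\<^sub>R (Fs i x - Fs i y))))\<^sup>2 \<le> (\<Sum>i<n. \<bar>v i - 1\<bar> * (Ls i * ?D))\<^sup>2"
    by (rule power_mono) simp
  also have "\<dots> \<le> (\<Sum>i<n. (\<bar>v i - 1\<bar> * (Ls i * ?D))\<^sup>2) * card {..<n}"
    by (rule sum_squared_le_sum_of_squares)
  also have "\<dots> = real n * ?D\<^sup>2 * (\<Sum>i<n. (Ls i)\<^sup>2 * (v i - 1)\<^sup>2)"
    by (simp add: sum_distrib_left sum_distrib_right power_mult_distrib algebra_simps)
  finally show ?thesis .
qed

lemma part4:
  fixes g :: "'w \<Rightarrow> 'a::euclidean_space \<Rightarrow> 'a" and Fs :: "nat \<Rightarrow> 'a \<Rightarrow> 'a"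
  assumes P: "prob_space M" and n1: "n \<ge> 1"
    and Fd: "F = (\<lambda>x. (1 / real n) *\<^sub>R (\<Sum>i<n. Fs i x))"
    and B: "arbitrary_sampling M g n Fs"
  shows "expected_residual M g F xs"
proof -
  interpret prob_space M by fact
  obtain v Ls where sv: "sampling_vector M n v" and sq: "\<forall>i<n. integrable M (\<lambda>\<omega>. (v \<omega> i)\<^sup>2)"
    and ge: "\<forall>x. AE \<omega> in M. g \<omega> x = (1 / real n) *\<^sub>R (\<Sum>i<n. v \<omega> i *\<^sub>R Fs i x)"
    and lip: "\<forall>i<n. lipschitz_on (Ls i) UNIV (Fs i)"
    using B unfolding arbitrary_sampling_def by blast
  have iv: "\<And>i. i<n \<Longrightarrow> integrable M (\<lambda>\<omega>. v \<omega> i)" using sv unfolding sampling_vector_def by blast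
  have iq: "integrable M (\<lambda>\<omega>. (v \<omega> i - 1)\<^sup>2)" if i: "i<n" for i
  proof -
    have "(\<lambda>\<omega>. (v \<omega> i - 1)\<^sup>2) = (\<lambda>\<omega>. (v \<omega> i)\<^sup>2 - 2 * v \<omega> i + 1)"
      by (simp add: fun_eq_iff power2_diff)
    moreover have "integrable M (\<lambda>\<omega>. (v \<omega> i)\<^sup>2 - 2 * v \<omega> i + 1)"
      using iv[OF i] sq i by auto
    ultimately show ?thesis by simp
  qed
  define E where "E i = integral\<^sup>L M (\<lambda>\<omega>. (v \<omega> i - 1)\<^sup>2)" for i
  have E0: "0 \<le> E i" for i unfolding E_def by (rule integral_nonneg_AE) auto
  define \<delta> where "\<delta> = 2 * real n * (\<Sum>i<n. (Ls i)\<^sup>2 * E i)"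
  show ?thesis unfolding expected_residual_def
  proof (rule exI[of _ \<delta>], intro conjI allI)
    show "0 \<le> \<delta>" unfolding \<delta>_def using E0 by (intro mult_nonneg_nonneg sum_nonneg) auto
    fix x
    let ?D = "norm (x - xs)"
    have "Esq M (\<lambda>\<omega>. (g \<omega> x - g \<omega> xs) - (F x - F xs)) \<le> (\<integral>\<^sup>+\<omega>. ennreal (real n * ?D\<^sup>2 * (\<Sum>i<n. (Ls i)\<^sup>2 * (v \<omega> i - 1)\<^sup>2)) \<partial>M)"
      unfolding Esq_def
    proof (rule nn_integral_mono_AE)
      show "AE \<omega> in M. ennreal ((norm ((g \<omega> x - g \<omega> xs) - (F x - F xs)))\<^sup>2) \<le> ennreal (real n * ?D\<^sup>2 * (\<Sum>i<n. (Ls i)\<^sup>2 * (v \<omega> i - 1)\<^sup>2))"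
        using ge[rule_format, of x] ge[rule_format, of xs]
      proof eventually_elim
        case (elim \<omega>)
        have "(g \<omega> x - g \<omega> xs) - (F x - F xs) = (1 / real n) *\<^sub>R (\<Sum>i<n. (v \<omega> i - 1) *\<^sub>R (Fs i x - Fs i xs))"
          unfolding Fd elim(1) elim(2) by (rule resid_eq)
        hence "(norm ((g \<omega> x - g \<omega> xs) - (F x - F xs)))\<^sup>2 \<le> real n * ?D\<^sup>2 * (\<Sum>i<n. (Ls i)\<^sup>2 * (v \<omega> i - 1)\<^sup>2)"
          using resid_bound[OF n1 lip, of "v \<omega>" x xs] by simp
        thus ?case by (rule ennreal_leI)
      qed
    qed
    also have "\<dots> = ennreal (integral\<^sup>L M (\<lambda>\<omega>. real n * ?D\<^sup>2 * (\<Sum>i<n. (Ls i)\<^sup>2 * (v \<omega> i - 1)\<^sup>2)))"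
    proof (rule nn_integral_eq_integral)
      show "integrable M (\<lambda>\<omega>. real n * ?D\<^sup>2 * (\<Sum>i<n. (Ls i)\<^sup>2 * (v \<omega> i - 1)\<^sup>2))"
        using iq by (intro integrable_mult_right integrable_sum) auto
      show "AE \<omega> in M. 0 \<le> real n * ?D\<^sup>2 * (\<Sum>i<n. (Ls i)\<^sup>2 * (v \<omega> i - 1)\<^sup>2)"
        by (intro AE_I2 mult_nonneg_nonneg sum_nonneg) auto
    qed
    also have "integral\<^sup>L M (\<lambda>\<omega>. real n * ?D\<^sup>2 * (\<Sum>i<n. (Ls i)\<^sup>2 * (v \<omega> i - 1)\<^sup>2)) = real n * ?D\<^sup>2 * (\<Sum>i<n. (Ls i)\<^sup>2 * E i)"
      unfolding E_def using iq by (simp add: integral_sum)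
    also have "real n * ?D\<^sup>2 * (\<Sum>i<n. (Ls i)\<^sup>2 * E i) = \<delta> / 2 * ?D\<^sup>2"
      unfolding \<delta>_def by simp
    finally show "Esq M (\<lambda>\<omega>. (g \<omega> x - g \<omega> xs) - (F x - F xs)) \<le> ennreal (\<delta> / 2 * ?D\<^sup>2)" .
  qed
qed

theorem proposition3p4:
  fixes M :: "'w measure" and Fs :: "nat \<Rightarrow> 'a::euclidean_space \<Rightarrow> 'a" and F :: "'a \<Rightarrow> 'a"
    and g :: "'w \<Rightarrow> 'a \<Rightarrow> 'a" and n :: nat and L :: real and xs :: 'a
  assumes "prob_space M" and "n \<ge> 1"
    and "F = (\<lambda>x. (1 / real n) *\<^sub>R (\<Sum>i<n. Fs i x))"
    and "\<forall>i<n. lipschitz_on L UNIV (Fs i)" and "lipschitz_on L UNIV F"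
    and "F xs = 0"
    and "\<forall>x. integrable M (\<lambda>\<omega>. g \<omega> x)"
    and "\<forall>x. integral\<^sup>L M (\<lambda>\<omega>. g \<omega> x) = F x"
  shows "(bounded_operator M g \<longrightarrow> bounded_variance M g F)
       \<and> (bounded_variance M g F \<longrightarrow> growth_condition M g F)
       \<and> (growth_condition M g F \<longrightarrow> condition6 M g F xs)
       \<and> (arbitrary_sampling M g n Fs \<longrightarrow> expected_residual M g F xs)
       \<and> (expected_cocoercive M g F xs \<longrightarrow> expected_residual M g F xs)
       \<and> (expected_residual M g F xs \<and> Esq M (\<lambda>\<omega>. g \<omega> xs) < \<infinity> \<longrightarrow> condition6 M g F xs)"
proof -
  note P = assms(1)
  show ?thesis
  proof (intro conjI impI)
    assume "bounded_operator M g"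
    thus "bounded_variance M g F" using part1[OF P assms(7) assms(8)] by blast
  next
    assume "bounded_variance M g F"
    thus "growth_condition M g F" using part2[OF P assms(7)] by blast
  next
    assume "growth_condition M g F"
    thus "condition6 M g F xs" using part3[OF assms(5) assms(6)] by blast
  next
    assume "arbitrary_sampling M g n Fs"
    thus "expected_residual M g F xs" using part4[OF P assms(2) assms(3)] by blast
  next
    assume "expected_cocoercive M g F xs"
    thus "expected_residual M g F xs" using part5[OF P assms(7) assms(5) assms(6)] by blast
  next
    assume "expected_residual M g F xs \<and> Esq M (\<lambda>\<omega>. g \<omega> xs) < \<infinity>"
    thus "condition6 M g F xs" using part6[OF P assms(7) assms(5) assms(6)] by blast
  qed
qed

end
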